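(* Let $\alpha, \beta, \gamma$ be distinct elements of the finite field $\mathbb{F}_q$. If $a_1, a_2, a_3 \in \mathbb{F}_q^*$ satisfy \[ 0 = \alpha(a_2 - a_1) + \beta(a_3 - a_2) + \gamma(a_1 - a_3) \] and \[ 0 = \alpha(a_2^2 - a_1^2) + \beta(a_3^2 - a_2^2) + \gamma(a_1^2 - a_3^2), \] then $a_1 = a_2 = a_3$.
   Context: $\mathbb{F}_q$ is the finite field with $q$ elements and $\mathbb{F}_q^* = \mathbb{F}_q \setminus \{0\}$. *)

theory Defs
  imports Main
begin

end

theory Submission
  imports Defs
begin

theorem lemma3p3:
  fixes \<alpha> \<beta> \<gamma> a1 a2 a3 :: "'a :: {field, finite}"
  assumes "\<alpha> \<noteq> \<beta>" and "\<beta> \<noteq> \<gamma>" and "\<alpha> \<noteq> \<gamma>"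
    and "a1 \<noteq> 0" and "a2 \<noteq> 0" and "a3 \<noteq> 0"
    and "0 = \<alpha> * (a2 - a1) + \<beta> * (a3 - a2) + \<gamma> * (a1 - a3)"
    and "0 = \<alpha> * (a2^2 - a1^2) + \<beta> * (a3^2 - a2^2) + \<gamma> * (a1^2 - a3^2)"
  shows "a1 = a2 \<and> a2 = a3"
proof -
  define u where "u = \<alpha> - \<gamma>"
  define v where "v = \<beta> - \<gamma>"
  have u0: "u \<noteq> 0" using assms(3) by (simp add: u_def)
  have e1: "u * (a2 - a1) + v * (a3 - a2) = 0"
    using assms(7) unfolding u_def v_def by (simp add: algebra_simps)
  have e2: "u * (a2 - a1) * (a2 + a1) + v * (a3 - a2) * (a3 + a2) = 0"
    using assms(8) unfolding u_def v_def by (simp add: algebra_simps power2_eq_square)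
  have vy: "v * (a3 - a2) = - (u * (a2 - a1))"
  proof -
    have "v * (a3 - a2) = (u * (a2 - a1) + v * (a3 - a2)) - u * (a2 - a1)" by simp
    also have "\<dots> = - (u * (a2 - a1))" using e1 by simp
    finally show ?thesis .
  qed
  have "u * (a2 - a1) * (a2 + a1) - u * (a2 - a1) * (a3 + a2) = 0"
  proof -
    have "v * (a3 - a2) * (a3 + a2) = - (u * (a2 - a1)) * (a3 + a2)" using vy by simp
    with e2 show ?thesis by simp
  qed
  hence "u * ((a2 - a1) * (a1 - a3)) = 0" by (simp add: algebra_simps)
  hence c: "a2 = a1 \<or> a1 = a3" using u0 by simp
  show ?thesis
  proof (cases "a2 = a1")
    case True
    hence "v * (a3 - a2) = 0" using e1 by simp
    moreover have "v \<noteq> 0" using assms(2) by (simp add: v_def)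
    ultimately show ?thesis using True by simp
  next
    case False
    hence a13: "a1 = a3" using c by simp
    hence "(u - v) * (a2 - a1) = 0" using e1 by (simp add: algebra_simps)
    moreover have "u - v \<noteq> 0" using assms(1) by (simp add: u_def v_def)
    ultimately show ?thesis using False by simp
  qed
qed

end
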